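(* Let $X_n,Y_n,Z_n,W_n$ be chosen as real numbers with $Q_n(1)=1$, $Q_n'(1)=1$, $Q_n(s^\nu)=s^\nu$, $Q_n'(s^\nu)=1$ and with $(X_n-1)/s^\nu$, $Y_n/s^\nu$, $(Z_n-1)/s^\nu$, $W_n/s^\nu$ converging as $s\to0^+$ to $\frac{d_1(d_1-3)(d_n-1)}{(d_1-1)^2d_n}$, $\frac{2d_1(d_n-1)}{(d_1-1)d_n}$, $0$, $\frac{d_n-1}{d_n}$ respectively. Let $\varphi(z)=s^\nu/z$ and $\widehat Q_n=\varphi\circ Q_n\circ\varphi^{-1}$. Then, as $s\to0^+$, $Q_n\to h_{d_1}$ and $\widehat Q_n\to h_{d_n}$ locally uniformly on $\widehat{\mathbb{C}}\setminus\{0\}$, where $h_d(z)=\frac{dz^d}{(d-1)z^d+1}$.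
   Context: $n\ge3$ odd, $d_1,\dots,d_n$ positive integers with $\sum1/d_i<1$, $d_{\max}=\max_id_i$, $D_i=d_i+d_{i+1}$, $\tau=\bigl(d_1d_nd_{\max}^{2(d_1-d_n)/d_1}\bigr)^{1/\sum_{i=1}^{n-1}(d_n/d_i)}$, $\nu=\frac{d_n}{d_n-1}\sum_{i=1}^{n-1}\frac1{d_i}$, $b_1=(d_{\max}^2\tau s)^{1/d_1}$, $b_i=(\tau s)^{1/d_i}b_{i-1}$, and $Q_n(z)=\frac{d_1z^{d_n}}{(d_1-1)X_nz^{d_1}+Y_nz+Z_n}\prod_{i=1}^{n-1}(z^{D_i}-b_i^{D_i})^{(-1)^{i-1}}+W_n$. Such $X_n,\dots,W_n$ exist for small $s$. *)

theory Defs
  imports "HOL-Analysis.Analysis"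
begin

definition dmax :: "nat \<Rightarrow> (nat \<Rightarrow> nat) \<Rightarrow> real" where
  "dmax n d = real (Max (d ` {1..n}))"

definition tau :: "nat \<Rightarrow> (nat \<Rightarrow> nat) \<Rightarrow> real" where
  "tau n d = (real (d 1) * real (d n) *
      dmax n d powr (2 * (real (d 1) - real (d n)) / real (d 1)))
      powr (1 / (\<Sum>i=1..n-1. real (d n) / real (d i)))"

definition nu :: "nat \<Rightarrow> (nat \<Rightarrow> nat) \<Rightarrow> real" where
  "nu n d = real (d n) / (real (d n) - 1) * (\<Sum>i=1..n-1. 1 / real (d i))"

text \<open>b_1 = (dmax^2 tau s)^(1/d_1), b_i = (tau s)^(1/d_i) b_(i-1); index 0 unused.\<close>
fun bcoef :: "nat \<Rightarrow> (nat \<Rightarrow> nat) \<Rightarrow> real \<Rightarrow> nat \<Rightarrow> real" where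
  "bcoef n d s 0 = 1"
| "bcoef n d s (Suc i) =
     (if i = 0 then (dmax n d ^ 2 * tau n d * s) powr (1 / real (d 1))
      else (tau n d * s) powr (1 / real (d (Suc i))) * bcoef n d s i)"

definition DD :: "(nat \<Rightarrow> nat) \<Rightarrow> nat \<Rightarrow> nat" where
  "DD d i = d i + d (Suc i)"

definition Qn :: "nat \<Rightarrow> (nat \<Rightarrow> nat) \<Rightarrow> real \<Rightarrow> real \<Rightarrow> real \<Rightarrow> real \<Rightarrow> real \<Rightarrow> complex \<Rightarrow> complex" where
  "Qn n d s X Y Z W z =
     of_nat (d 1) * z ^ d n /
       ((of_nat (d 1) - 1) * of_real X * z ^ d 1 + of_real Y * z + of_real Z) *
     (\<Prod>i=1..n-1. (z ^ DD d i - of_real (bcoef n d s i) ^ DD d i) powi ((-1) ^ (i - 1)))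
     + of_real W"

text \<open>Points where the formula for Q_n has no vanishing denominator (so its value is the
  finite value of the rational map there).\<close>
definition Qn_regular :: "nat \<Rightarrow> (nat \<Rightarrow> nat) \<Rightarrow> real \<Rightarrow> real \<Rightarrow> real \<Rightarrow> real \<Rightarrow> complex \<Rightarrow> bool" where
  "Qn_regular n d s X Y Z z \<longleftrightarrow>
     (of_nat (d 1) - 1) * of_real X * z ^ d 1 + of_real Y * z + of_real Z \<noteq> 0 \<and>
     (\<forall>i\<in>{1..n-1}. even i \<longrightarrow> z ^ DD d i - of_real (bcoef n d s i) ^ DD d i \<noteq> 0)"

text \<open>Conjugated map: phi o Q_n o phi^-1 with phi z = s^nu / z (phi is an involution).\<close>
definition Qhat :: "nat \<Rightarrow> (nat \<Rightarrow> nat) \<Rightarrow> real \<Rightarrow> real \<Rightarrow> real \<Rightarrow> real \<Rightarrow> real \<Rightarrow> complex \<Rightarrow> complex" where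
  "Qhat n d s X Y Z W z =
     of_real (s powr nu n d) / Qn n d s X Y Z W (of_real (s powr nu n d) / z)"

definition Qhat_regular :: "nat \<Rightarrow> (nat \<Rightarrow> nat) \<Rightarrow> real \<Rightarrow> real \<Rightarrow> real \<Rightarrow> real \<Rightarrow> real \<Rightarrow> complex \<Rightarrow> bool" where
  "Qhat_regular n d s X Y Z W z \<longleftrightarrow>
     z \<noteq> 0 \<and> Qn_regular n d s X Y Z (of_real (s powr nu n d) / z) \<and>
     Qn n d s X Y Z W (of_real (s powr nu n d) / z) \<noteq> 0"

definition hmap :: "nat \<Rightarrow> complex \<Rightarrow> complex" where
  "hmap dd z = of_nat dd * z ^ dd / ((of_nat dd - 1) * z ^ dd + 1)"

definition h_regular :: "nat \<Rightarrow> complex \<Rightarrow> bool" where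
  "h_regular dd z \<longleftrightarrow> (of_nat dd - 1) * z ^ dd + 1 \<noteq> (0::complex)"

definition chordal :: "complex \<Rightarrow> complex \<Rightarrow> real" where
  "chordal a b = 2 * cmod (a - b) / (sqrt (1 + (cmod a)\<^sup>2) * sqrt (1 + (cmod b)\<^sup>2))"

text \<open>The compact sets {|z| \<ge> r} \<union> {\<infinity>} exhaust the sphere minus 0; the supremum is
  taken over the dense set of finite points where both formulas are regular (all maps are
  continuous into the sphere, and the excluded sets are finite).\<close>
definition loc_unif_conv_sphere ::
  "(real \<Rightarrow> complex \<Rightarrow> complex) \<Rightarrow> (real \<Rightarrow> complex \<Rightarrow> bool) \<Rightarrow>
   (complex \<Rightarrow> complex) \<Rightarrow> (complex \<Rightarrow> bool) \<Rightarrow> bool" where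
  "loc_unif_conv_sphere F Freg G Greg \<longleftrightarrow>
     (\<forall>r>0. \<forall>\<epsilon>>0. \<forall>\<^sub>F s in at_right 0.
        \<forall>z. r \<le> cmod z \<longrightarrow> Freg s z \<longrightarrow> Greg z \<longrightarrow> chordal (F s z) (G z) < \<epsilon>)"

end

theory Submission
  imports Defs
begin

lemma chordal_le: "chordal a b \<le> 2 * cmod (a - b)"
proof -
  have 1: "sqrt (1 + (cmod a)\<^sup>2) \<ge> 1" "sqrt (1 + (cmod b)\<^sup>2) \<ge> 1" by auto
  have "sqrt (1 + (cmod a)\<^sup>2) * sqrt (1 + (cmod b)\<^sup>2) \<ge> 1"
    using mult_mono[OF 1] by simp
  moreover have "0 \<le> 2 * cmod (a - b)" by simp
  ultimately show ?thesis unfolding chordal_def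
    by (simp add: divide_le_eq mult_le_cancel_left1)
qed

lemma sqrt_inv_aux: "a \<noteq> 0 \<Longrightarrow> sqrt (1 + (cmod (1/a))\<^sup>2) = sqrt (1 + (cmod a)\<^sup>2) / cmod a"
proof -
  assume a: "a \<noteq> 0"
  have "1 + (cmod (1/a))\<^sup>2 = (1 + (cmod a)\<^sup>2) / (cmod a)\<^sup>2"
    using a by (simp add: norm_divide field_simps)
  then show ?thesis by (simp add: real_sqrt_divide)
qed

lemma chordal_inv: "a \<noteq> 0 \<Longrightarrow> b \<noteq> 0 \<Longrightarrow> chordal (1/a) (1/b) = chordal a b"
proof -
  assume a: "a \<noteq> 0" and b: "b \<noteq> 0"
  have "cmod (1/a - 1/b) = cmod (a - b) / (cmod a * cmod b)"
    using a b by (simp add: field_simps norm_divide norm_minus_commute norm_mult)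
  then show ?thesis unfolding chordal_def using a b
    by (simp add: sqrt_inv_aux field_simps)
qed

lemma chordal_le_inv: "a \<noteq> 0 \<Longrightarrow> b \<noteq> 0 \<Longrightarrow> chordal a b \<le> 2 * cmod (1/a - 1/b)"
  by (metis chordal_inv chordal_le nonzero_inverse_inverse_eq inverse_eq_divide)



definition beta :: "(nat \<Rightarrow> nat) \<Rightarrow> nat \<Rightarrow> real" where
  "beta d m = (\<Sum>j=1..m. 1 / real (d j))"

lemma beta_Suc: "beta d (Suc m) = beta d m + 1 / real (d (Suc m))"
  by (simp add: beta_def)

lemma sum_eD:
  "(\<Sum>i=1..m. (-1::int)^(i-1) * int (DD d i)) = int (d 1) - (-1)^m * int (d (Suc m))"
proof (induction m)
  case 0 then show ?case by simp
next
  case (Suc m)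
  have "(\<Sum>i=1..Suc m. (-1::int)^(i-1) * int (DD d i)) =
        (\<Sum>i=1..m. (-1::int)^(i-1) * int (DD d i)) + (-1)^m * int (DD d (Suc m))"
    by simp
  also have "\<dots> = int (d 1) - (-1)^(Suc m) * int (d (Suc (Suc m)))"
    using Suc by (simp add: DD_def algebra_simps)
  finally show ?case .
qed

lemma sum_eDbeta:
  assumes "\<forall>i. 1 \<le> i \<longrightarrow> i \<le> m \<longrightarrow> d i > 0"
  shows "(\<Sum>i=1..m. real_of_int ((-1)^(i-1)) * real (DD d i) * beta d i)
     = (1 - (-1)^m)/2 - (-1)^m * real (d (Suc m)) * beta d m"
  using assms
proof (induction m)
  case 0 then show ?case by (simp add: beta_def)
next
  case (Suc m)
  have pos: "real (d (Suc m)) > 0" using Suc.prems by auto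
  have "(\<Sum>i=1..Suc m. real_of_int ((-1)^(i-1)) * real (DD d i) * beta d i) =
        (\<Sum>i=1..m. real_of_int ((-1)^(i-1)) * real (DD d i) * beta d i)
          + (-1)^m * real (DD d (Suc m)) * beta d (Suc m)"
    by simp
  also have "\<dots> = (1 - (-1)^m)/2 - (-1)^m * real (d (Suc m)) * beta d m
          + (-1)^m * real (DD d (Suc m)) * beta d (Suc m)"
    using Suc by simp
  also have "\<dots> = (1 - (-1)^Suc m)/2 - (-1)^(Suc m) * real (d (Suc (Suc m))) * beta d (Suc m)"
    using pos by (simp add: DD_def beta_Suc field_simps)
  finally show ?case .
qed

lemma powi_sign: "1 \<le> i \<Longrightarrow> (x::'a::division_ring) powi ((-1)^(i-1)) = (if odd i then x else inverse x)"
  by (cases i) (auto simp: power_int_minus)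

lemma powi_prod_sum:
  assumes "(z::'a::field) \<noteq> 0"
  shows "(\<Prod>i\<in>A. z powi f i) = z powi (\<Sum>i\<in>A. f i)"
proof (induction A rule: infinite_finite_induct)
  case (insert x F) then show ?case using assms by (simp add: power_int_add)
qed auto



lemma bcoef_pos_ln:
  assumes s: "s > 0" and dm: "dmax n d > 0" and t: "tau n d > 0"
  shows "1 \<le> i \<Longrightarrow> bcoef n d s i > 0 \<and>
     ln (bcoef n d s i) = 2 * ln (dmax n d) / real (d 1) + beta d i * ln (tau n d * s)"
proof (induction i)
  case 0 then show ?case by simp
next
  case (Suc i)
  show ?case
  proof (cases "i = 0")
    case True
    have "ln ((dmax n d)\<^sup>2 * tau n d * s) = 2 * ln (dmax n d) + ln (tau n d * s)"
      using s dm t by (simp add: ln_mult ln_realpow)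
    then show ?thesis using True s dm t by (simp add: beta_def field_simps add_divide_distrib)
  next
    case False
    then have IH: "bcoef n d s i > 0 \<and>
     ln (bcoef n d s i) = 2 * ln (dmax n d) / real (d 1) + beta d i * ln (tau n d * s)"
      using Suc by auto
    have "ln (bcoef n d s (Suc i)) = ln (tau n d * s) / real (d (Suc i)) + ln (bcoef n d s i)"
      using False IH s t by (simp add: ln_mult)
    then show ?thesis using False IH s t by (simp add: beta_Suc field_simps)
  qed
qed

lemma bcoef_eq:
  assumes s: "s > 0" and dm: "dmax n d > 0" and t: "tau n d > 0" and i: "1 \<le> i"
  shows "bcoef n d s i = exp (2 * ln (dmax n d) / real (d 1) + beta d i * ln (tau n d)) * s powr beta d i"
proof -
  from bcoef_pos_ln[OF s dm t i] have b: "bcoef n d s i > 0"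
    and l: "ln (bcoef n d s i) = 2 * ln (dmax n d) / real (d 1) + beta d i * ln (tau n d * s)" by auto
  have "bcoef n d s i = exp (ln (bcoef n d s i))" using b by simp
  also have "\<dots> = exp (2 * ln (dmax n d) / real (d 1) + beta d i * ln (tau n d)) * exp (beta d i * ln s)"
    using s t by (simp add: l ln_mult algebra_simps exp_add)
  also have "exp (beta d i * ln s) = s powr beta d i" using s by (simp add: powr_def mult.commute)
  finally show ?thesis .
qed



locale params =
  fixes n :: nat and d :: "nat \<Rightarrow> nat"
  assumes odd_n: "odd n" and n3: "n \<ge> 3"
    and dpos: "\<forall>i\<in>{1..n}. d i > 0"
    and dsum: "(\<Sum>i=1..n. 1 / real (d i)) < 1"
begin

lemma dpos': "1 \<le> i \<Longrightarrow> i \<le> n \<Longrightarrow> d i > 0" using dpos by auto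

lemma beta_n: "beta d n < 1" using dsum by (simp add: beta_def)

lemma beta_mono: "i \<le> j \<Longrightarrow> beta d i \<le> beta d j"
  unfolding beta_def by (rule sum_mono2) auto

lemma beta_pos: "1 \<le> i \<Longrightarrow> beta d i > 0"
proof -
  assume i: "1 \<le> i"
  have "beta d 1 > 0" using dpos'[of 1] n3 by (simp add: beta_def)
  then show ?thesis using beta_mono[OF i] by simp
qed

lemma dn_gt1: "real (d n) > 1"
proof -
  have "beta d n = beta d (n-1) + 1 / real (d n)"
    using beta_Suc[of d "n-1"] n3 by simp
  moreover have "beta d (n-1) > 0" using beta_pos n3 by simp
  ultimately have "1 / real (d n) < 1" using beta_n by simp
  moreover have "real (d n) > 0" using dpos' n3 by simp
  ultimately show ?thesis by (simp add: divide_less_eq)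
qed

lemma d1_gt1: "real (d 1) > 1"
proof -
  have "beta d 1 < 1" using beta_mono[of 1 n] beta_n n3 by simp
  moreover have "real (d 1) > 0" using dpos' n3 by simp
  ultimately show ?thesis by (simp add: beta_def divide_less_eq)
qed

lemma dmax_pos: "dmax n d > 0"
proof -
  have "d 1 \<le> Max (d ` {1..n})" using n3 by (intro Max_ge) auto
  then show ?thesis using dpos' n3 unfolding dmax_def by (metis of_nat_0_less_iff order_less_le_trans le_numeral_extra(4) one_le_numeral le_trans)
qed

lemma nu_eq: "nu n d = real (d n) / (real (d n) - 1) * beta d (n-1)"
  by (simp add: nu_def beta_def)

lemma nu_gt: "1 \<le> i \<Longrightarrow> i \<le> n - 1 \<Longrightarrow> beta d i < nu n d"
proof -
  assume i: "1 \<le> i" "i \<le> n - 1"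
  have b: "beta d (n-1) > 0" using beta_pos n3 by simp
  have "beta d (n-1) < real (d n) / (real (d n) - 1) * beta d (n-1)"
    using b dn_gt1 by (simp add: field_simps)
  then show ?thesis using beta_mono[OF i(2)] nu_eq by simp
qed

lemma nu_pos: "nu n d > 0"
proof -
  have "1 \<le> n - 1" using n3 by simp
  then show ?thesis using nu_gt[of 1] beta_pos[of 1] by simp
qed

definition base where "base = real (d 1) * real (d n) *
      dmax n d powr (2 * (real (d 1) - real (d n)) / real (d 1))"

lemma S_eq: "(\<Sum>i=1..n-1. real (d n) / real (d i)) = real (d n) * beta d (n-1)"
  by (simp add: beta_def sum_distrib_left)

lemma base_pos: "base > 0" using dmax_pos dn_gt1 d1_gt1 by (simp add: base_def)

lemma tau_eq: "tau n d = base powr (1 / (real (d n) * beta d (n-1)))"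
  unfolding tau_def base_def S_eq ..

lemma tau_pos: "tau n d > 0" using base_pos by (simp add: tau_eq)

lemma ln_tau: "real (d n) * beta d (n-1) * ln (tau n d) = ln base"
proof -
  have "real (d n) * beta d (n-1) > 0" using dn_gt1 beta_pos n3 by simp
  moreover have "ln (tau n d) = (1 / (real (d n) * beta d (n-1))) * ln base"
    unfolding tau_eq by (rule ln_powr)
  moreover have "\<And>q L B::real. q > 0 \<Longrightarrow> L = (1/q) * B \<Longrightarrow> q * L = B" by simp
  ultimately show ?thesis by blast
qed

lemma ln_base: "ln base = ln (real (d 1)) + ln (real (d n)) + 2 * (real (d 1) - real (d n)) / real (d 1) * ln (dmax n d)"
  using dmax_pos dn_gt1 d1_gt1 by (simp add: base_def ln_mult)

end


context params begin

lemma even_nm1: "even (n - 1)" using odd_n n3 by simp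

lemma sum_eD_n: "(\<Sum>i=1..n-1. real_of_int ((-1::int)^(i-1)) * real (DD d i)) = real (d 1) - real (d n)"
proof -
  have "(\<Sum>i=1..n-1. (-1::int)^(i-1) * int (DD d i)) = int (d 1) - int (d n)"
    using sum_eD[where m="n-1" and d=d] even_nm1 n3 by simp
  then have "real_of_int (\<Sum>i=1..n-1. (-1::int)^(i-1) * int (DD d i)) = real (d 1) - real (d n)"
    by simp
  then show ?thesis by simp
qed

lemma sum_eDbeta_n: "(\<Sum>i=1..n-1. real_of_int ((-1::int)^(i-1)) * real (DD d i) * beta d i)
   = - real (d n) * beta d (n-1)"
proof -
  have "\<forall>i. 1 \<le> i \<longrightarrow> i \<le> n-1 \<longrightarrow> d i > 0" using dpos' by auto
  from sum_eDbeta[OF this] show ?thesis using even_nm1 n3 by simp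
qed

lemma Pprod:
  assumes s: "s > 0"
  shows "(\<Prod>i=1..n-1. (bcoef n d s i ^ DD d i) powi ((-1)^(i-1))) * (s powr nu n d) ^ d n
     = s powr nu n d / (real (d 1) * real (d n))"
proof -
  define c where "c = 2 * ln (dmax n d) / real (d 1)"
  define Lt where "Lt = ln (tau n d * s)"
  have bi: "bcoef n d s i = exp (c + beta d i * Lt)" if "1 \<le> i" for i
  proof -
    from bcoef_pos_ln[OF s dmax_pos tau_pos that] show ?thesis
      by (metis c_def Lt_def exp_ln)
  qed
  have "(\<Prod>i=1..n-1. (bcoef n d s i ^ DD d i) powi ((-1)^(i-1)))
      = (\<Prod>i=1..n-1. exp (real_of_int ((-1)^(i-1)) * real (DD d i) * (c + beta d i * Lt)))"
  proof (rule prod.cong[OF refl])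
    fix i assume "i \<in> {1..n-1}"
    then have "bcoef n d s i = exp (c + beta d i * Lt)" using bi by auto
    then show "(bcoef n d s i ^ DD d i) powi ((-1)^(i-1)) =
       exp (real_of_int ((-1)^(i-1)) * real (DD d i) * (c + beta d i * Lt))"
      by (simp add: power_int_power exp_power_int mult_ac)
  qed
  also have "\<dots> = exp (\<Sum>i=1..n-1. real_of_int ((-1)^(i-1)) * real (DD d i) * (c + beta d i * Lt))"
    by (simp add: exp_sum)
  also have "(\<Sum>i=1..n-1. real_of_int ((-1)^(i-1)) * real (DD d i) * (c + beta d i * Lt))
     = c * (\<Sum>i=1..n-1. real_of_int ((-1::int)^(i-1)) * real (DD d i))
       + Lt * (\<Sum>i=1..n-1. real_of_int ((-1::int)^(i-1)) * real (DD d i) * beta d i)"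
  proof -
    have "(\<Sum>i=1..n-1. real_of_int ((-1)^(i-1)) * real (DD d i) * (c + beta d i * Lt))
      = (\<Sum>i=1..n-1. c * (real_of_int ((-1::int)^(i-1)) * real (DD d i))
          + Lt * (real_of_int ((-1::int)^(i-1)) * real (DD d i) * beta d i))"
      by (rule sum.cong) (simp_all add: algebra_simps)
    then show ?thesis by (simp add: sum.distrib sum_distrib_left)
  qed
  also have "\<dots> = c * (real (d 1) - real (d n)) - Lt * real (d n) * beta d (n-1)"
    unfolding sum_eD_n sum_eDbeta_n by simp
  also have "\<dots> = - ln (real (d 1)) - ln (real (d n)) - real (d n) * beta d (n-1) * ln s"
  proof -
    have "Lt = ln (tau n d) + ln s" using s tau_pos by (simp add: Lt_def ln_mult)
    then have "Lt * real (d n) * beta d (n-1) = ln base + real (d n) * beta d (n-1) * ln s"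
      using ln_tau by (simp add: algebra_simps)
    then show ?thesis using d1_gt1 by (simp add: ln_base c_def field_simps)
  qed
  finally have P: "(\<Prod>i=1..n-1. (bcoef n d s i ^ DD d i) powi ((-1)^(i-1)))
     = exp (- ln (real (d 1)) - ln (real (d n)) - real (d n) * beta d (n-1) * ln s)" .
  have sp: "(s powr nu n d) ^ d n = exp (real (d n) * nu n d * ln s)"
    using s by (simp add: powr_def exp_of_nat_mult[symmetric] mult_ac)
  have nurel: "real (d n) * nu n d - real (d n) * beta d (n-1) = nu n d"
    using dn_gt1 by (simp add: nu_eq field_simps)
  have "exp (- ln (real (d 1)) - ln (real (d n)) - real (d n) * beta d (n-1) * ln s)
        * exp (real (d n) * nu n d * ln s)
      = exp ((real (d n) * nu n d - real (d n) * beta d (n-1)) * ln s) / (real (d 1) * real (d n))"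
  proof -
    define B where "B = real (d n) * beta d (n-1) * ln s"
    define C where "C = real (d n) * nu n d * ln s"
    have ab: "real (d 1) * real (d n) > 0" using d1_gt1 dn_gt1 by simp
    have "- ln (real (d 1)) - ln (real (d n)) - B = - B - ln (real (d 1) * real (d n))"
      using d1_gt1 dn_gt1 by (simp add: ln_mult)
    then have "exp (- ln (real (d 1)) - ln (real (d n)) - B) = exp (- B) / (real (d 1) * real (d n))"
      using ab by (simp only: exp_diff exp_ln)
    moreover have "exp (- B) * exp C = exp (C - B)" by (simp add: exp_add[symmetric])
    ultimately have "exp (- ln (real (d 1)) - ln (real (d n)) - B) * exp C = exp (C - B) / (real (d 1) * real (d n))"
      by simp
    moreover have "C - B = (real (d n) * nu n d - real (d n) * beta d (n-1)) * ln s"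
      by (simp add: B_def C_def algebra_simps)
    ultimately show ?thesis unfolding B_def C_def by simp
  qed
  also have "\<dots> = s powr nu n d / (real (d 1) * real (d n))"
    using s unfolding nurel by (simp add: powr_def mult.commute)
  finally show ?thesis using P sp by simp
qed

end


lemma prod_factor1:
  fixes z :: complex
  assumes "z \<noteq> 0"
  shows "(\<Prod>i\<in>I. (z^D i - c i^D i) powi e i) =
     (\<Prod>i\<in>I. (z^D i) powi e i) * (\<Prod>i\<in>I. (1 - (c i/z)^D i) powi e i)"
proof -
  have eq: "z^D i * (1 - (c i/z)^D i) = z^D i - c i^D i" for i
    using assms by (simp add: power_divide field_simps)
  have "(\<Prod>i\<in>I. (z^D i - c i^D i) powi e i) = (\<Prod>i\<in>I. (z^D i * (1 - (c i/z)^D i)) powi e i)"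
    by (simp only: eq)
  then show ?thesis by (simp add: power_int_mult_distrib prod.distrib)
qed

lemma prod_factor2:
  fixes w :: complex
  assumes "\<forall>i\<in>I. c i \<noteq> 0"
  shows "(\<Prod>i\<in>I. (w^D i - c i^D i) powi e i) =
     (\<Prod>i\<in>I. (- (c i^D i)) powi e i) * (\<Prod>i\<in>I. (1 - (w / c i)^D i) powi e i)"
proof -
  have eq: "- (c i^D i) * (1 - (w / c i)^D i) = w^D i - c i^D i" if "i \<in> I" for i
    using assms that by (simp add: power_divide field_simps)
  have "(\<Prod>i\<in>I. (w^D i - c i^D i) powi e i) = (\<Prod>i\<in>I. (- (c i^D i) * (1 - (w / c i)^D i)) powi e i)"
    apply (rule prod.cong[OF refl])
    subgoal for i by (subst eq, assumption) (rule refl)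
    done
  then show ?thesis by (simp only: power_int_mult_distrib prod.distrib)
qed

lemma neg_powi_sign: "(- (x::complex)) powi ((-1::int)^k) = - (x powi ((-1)^k))"
proof -
  have "(- x) powi ((-1::int)^k) = (-1) powi ((-1::int)^k) * x powi ((-1)^k)"
    by (metis mult_minus1 power_int_mult_distrib)
  moreover have "(-1::complex) powi ((-1::int)^k) = -1"
    by (cases "even k") (auto simp: power_int_minus)
  ultimately show ?thesis by simp
qed

context params begin

lemma sum_Dint: "(\<Sum>i=1..n-1. int (DD d i) * (-1)^(i-1)) = int (d 1) - int (d n)"
  using sum_eD[where m="n-1" and d=d] even_nm1 n3 by (simp add: mult.commute)

lemma Qn_form1:
  fixes z :: complex
  assumes z: "z \<noteq> 0"
  shows "Qn n d s X Y Z W z =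
    of_nat (d 1) * (\<Prod>i=1..n-1. (1 - (of_real (bcoef n d s i) / z)^DD d i) powi ((-1)^(i-1)))
     / ((of_nat (d 1) - 1) * of_real X + of_real Y * (1/z)^(d 1 - 1) + of_real Z * (1/z)^(d 1))
    + of_real W"
proof -
  define \<rho> where "\<rho> = (\<Prod>i=1..n-1. (1 - (of_real (bcoef n d s i) / z)^DD d i) powi ((-1::int)^(i-1)))"
  define E where "E = (of_nat (d 1) - 1) * of_real X + of_real Y * (1/z)^(d 1 - 1) + of_real Z * (1/z)^(d 1)"
  have P: "(\<Prod>i=1..n-1. (z ^ DD d i - of_real (bcoef n d s i) ^ DD d i) powi ((-1)^(i-1)))
      = z powi (int (d 1) - int (d n)) * \<rho>"
  proof -
    have "(\<Prod>i=1..n-1. (z ^ DD d i) powi ((-1::int)^(i-1))) = (\<Prod>i=1..n-1. z powi (int (DD d i) * (-1)^(i-1)))"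
      by (simp add: power_int_power)
    also have "\<dots> = z powi (int (d 1) - int (d n))"
      by (simp only: powi_prod_sum[OF z] sum_Dint)
    finally have h: "(\<Prod>i=1..n-1. (z ^ DD d i) powi ((-1::int)^(i-1))) = z powi (int (d 1) - int (d n))" .
    show ?thesis unfolding \<rho>_def prod_factor1[OF z] h ..
  qed
  have d1: "d 1 \<ge> 1" using d1_gt1 by simp
  have DE: "(of_nat (d 1) - 1) * of_real X * z ^ d 1 + of_real Y * z + of_real Z = z ^ d 1 * E"
  proof -
    have "z ^ d 1 * (1/z)^(d 1 - 1) = z"
    proof -
      have "z ^ d 1 = z * z ^ (d 1 - 1)" using d1 by (metis Suc_diff_le diff_Suc_1 power_Suc)
      then show ?thesis using z by (simp add: power_one_over)
    qed
    moreover have "z ^ d 1 * (1/z)^(d 1) = 1" using z by (simp add: power_one_over)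
    ultimately show ?thesis unfolding E_def by (simp add: algebra_simps)
  qed
  have zz: "z ^ d n * z powi (int (d 1) - int (d n)) = z ^ d 1"
  proof -
    have "z powi (int (d n) + (int (d 1) - int (d n))) = z powi int (d n) * z powi (int (d 1) - int (d n))"
      using z by (rule power_int_add[OF disjI1])
    moreover have "int (d n) + (int (d 1) - int (d n)) = int (d 1)" by simp
    ultimately show ?thesis by (metis power_int_of_nat)
  qed
  have "Qn n d s X Y Z W z = of_nat (d 1) * z ^ d n / (z ^ d 1 * E) * (z powi (int (d 1) - int (d n)) * \<rho>) + of_real W"
    unfolding Qn_def DE P ..
  also have "\<dots> = of_nat (d 1) * \<rho> / E + of_real W"
    using z zz by (simp add: field_simps)
  finally show ?thesis unfolding \<rho>_def E_def .
qed

end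


lemma aux_alg:
  fixes c a P D r W v e \<sigma> :: complex
  assumes "c \<noteq> 0" "\<sigma> \<noteq> 0" "a * P = \<sigma> * v / (c * e)"
  shows "c * a / D * P * r + W = \<sigma> * (v * r / (e * D) + W / \<sigma>)"
proof -
  have "c * a / D * P * r = c * (a * P) * r / D" by simp
  also have "\<dots> = \<sigma> * (v * r / (e * D))" using assms by (simp add: assms(3))
  finally show ?thesis using assms(2) by (simp add: distrib_left)
qed

context params begin

lemma Qn_form2:
  fixes w :: complex
  assumes s: "s > 0"
  shows "Qn n d s X Y Z W w =
    of_nat (d 1) * w ^ d n / ((of_nat (d 1) - 1) * of_real X * w ^ d 1 + of_real Y * w + of_real Z)
     * of_real (\<Prod>i=1..n-1. (bcoef n d s i ^ DD d i) powi ((-1)^(i-1)))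
     * (\<Prod>i=1..n-1. (1 - (w / of_real (bcoef n d s i))^DD d i) powi ((-1)^(i-1)))
    + of_real W"
proof -
  have bpos: "\<forall>i\<in>{1..n-1}. complex_of_real (bcoef n d s i) \<noteq> 0"
    using bcoef_pos_ln[OF s dmax_pos tau_pos] by force
  have "(\<Prod>i=1..n-1. (- (complex_of_real (bcoef n d s i) ^ DD d i)) powi ((-1::int)^(i-1)))
      = (\<Prod>i=1..n-1. - ((complex_of_real (bcoef n d s i) ^ DD d i) powi ((-1::int)^(i-1))))"
    by (simp only: neg_powi_sign)
  also have "\<dots> = (\<Prod>i=1..n-1. ((complex_of_real (bcoef n d s i) ^ DD d i) powi ((-1::int)^(i-1))))"
    using even_nm1 by (simp add: prod_uminus)
  also have "\<dots> = of_real (\<Prod>i=1..n-1. (bcoef n d s i ^ DD d i) powi ((-1)^(i-1)))"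
    by simp
  finally have h: "(\<Prod>i=1..n-1. (- (complex_of_real (bcoef n d s i) ^ DD d i)) powi ((-1::int)^(i-1)))
     = of_real (\<Prod>i=1..n-1. (bcoef n d s i ^ DD d i) powi ((-1)^(i-1)))" .
  show ?thesis unfolding Qn_def prod_factor2[OF bpos] h by (simp add: mult.assoc)
qed

lemma Qhat_form:
  fixes z :: complex
  assumes s: "s > 0" and z: "z \<noteq> 0"
  defines "\<sigma> \<equiv> s powr nu n d"
  defines "w \<equiv> of_real \<sigma> / z"
  shows "Qn n d s X Y Z W w = of_real \<sigma> *
     ((1/z) ^ d n * (\<Prod>i=1..n-1. (1 - (w / of_real (bcoef n d s i))^DD d i) powi ((-1)^(i-1)))
        / (of_nat (d n) * ((of_nat (d 1) - 1) * of_real X * w ^ d 1 + of_real Y * w + of_real Z))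
      + of_real (W / \<sigma>))"
proof -
  have sig: "\<sigma> > 0" using s by (simp add: \<sigma>_def)
  define P where "P = (\<Prod>i=1..n-1. (bcoef n d s i ^ DD d i) powi ((-1)^(i-1)))"
  have PP: "P * \<sigma> ^ d n = \<sigma> / (real (d 1) * real (d n))"
    unfolding P_def \<sigma>_def by (rule Pprod[OF s])
  have wn: "w ^ d n * of_real P = of_real \<sigma> * (1/z)^d n / (of_nat (d 1) * of_nat (d n))"
  proof -
    have "w ^ d n * of_real P = (1/z)^d n * of_real (P * \<sigma> ^ d n)"
      by (simp add: w_def power_divide field_simps)
    also have "\<dots> = of_real \<sigma> * (1/z)^d n / (of_nat (d 1) * of_nat (d n))"
      unfolding PP by simp
    finally show ?thesis .
  qed
  have d1: "(of_nat (d 1) :: complex) \<noteq> 0" using d1_gt1 by simp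
  have "of_real (W / \<sigma>) = (of_real W / of_real \<sigma> :: complex)" by simp
  then show ?thesis
    unfolding Qn_form2[OF s] P_def[symmetric]
    using aux_alg[OF d1 _ wn] sig by simp
qed

end


lemma factor_bound:
  fixes t :: complex
  assumes "cmod t \<le> \<eta>" "\<eta> \<le> 1/2"
  shows "cmod ((1 - t) powi ((-1::int)^k) - 1) \<le> 2 * \<eta>"
proof (cases "even k")
  case True
  have "cmod t \<le> 2 * \<eta>" using assms norm_ge_zero[of t] by linarith
  then show ?thesis using True by (simp add: norm_minus_commute)
next
  case False
  have n1: "cmod (1 - t) \<ge> 1/2"
    using assms norm_triangle_ineq2[of 1 t] by simp
  then have nz: "1 - t \<noteq> 0" by auto
  have "(1 - t) powi ((-1::int)^k) - 1 = t / (1 - t)"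
    using False nz by (simp add: power_int_minus field_simps)
  then have "cmod ((1 - t) powi ((-1::int)^k) - 1) = cmod t / cmod (1 - t)"
    by (simp add: norm_divide)
  also have "\<dots> \<le> cmod t / (1/2)"
    using n1 by (intro divide_left_mono) auto
  also have "\<dots> \<le> 2 * \<eta>" using assms by simp
  finally show ?thesis .
qed

lemma prod_near1:
  fixes t :: "nat \<Rightarrow> complex"
  assumes "\<forall>i\<in>A. cmod (t i) \<le> \<eta>" "\<eta> \<le> 1/2"
  shows "cmod ((\<Prod>i\<in>A. (1 - t i) powi ((-1::int)^(i-1))) - 1) \<le> (1 + 2*\<eta>)^card A - 1"
proof -
  define f where "f i = (1 - t i) powi ((-1::int)^(i-1)) - 1" for i
  have "cmod ((\<Prod>i\<in>A. 1 + f i) - 1) \<le> (\<Prod>i\<in>A. 1 + cmod (f i)) - 1"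
    by (rule norm_prod_minus1_le_prod_minus1)
  also have "(\<Prod>i\<in>A. 1 + cmod (f i)) \<le> (\<Prod>i\<in>A. 1 + 2*\<eta>)"
    using assms factor_bound unfolding f_def by (intro prod_mono) auto
  finally show ?thesis by (simp add: f_def)
qed

lemma part1_point:
  fixes E E0 \<rho> W :: complex and c e1 M e4 e2 :: real
  assumes c: "c > 0" and h1: "cmod (E - E0) \<le> e1" and hM: "cmod E0 \<le> M"
    and h4: "cmod (\<rho> - 1) \<le> e4"
    and e2: "e2 = c * e4 + cmod W * (M + e1)" and e2s: "e2 < c / 2"
    and E: "E \<noteq> 0" and E0: "E0 \<noteq> 0"
  shows "chordal (of_real c * \<rho> / E + W) (of_real c / E0) \<le> 2 * ((c * e1 + e2 * M) / (c * c / 2))"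
proof -
  define N where "N = of_real c * \<rho> + W * E"
  have e1: "e1 \<ge> 0" using h1 norm_ge_zero order_trans by blast
  have "cmod E \<le> cmod E0 + cmod (E - E0)" by (metis add.commute diff_add_cancel norm_triangle_ineq)
  then have nE: "cmod E \<le> M + e1" using h1 hM by simp
  have "N - of_real c = of_real c * (\<rho> - 1) + W * E" by (simp add: N_def algebra_simps)
  then have "cmod (N - of_real c) \<le> c * cmod (\<rho> - 1) + cmod W * cmod E"
    using c by (metis abs_of_pos norm_mult norm_of_real norm_triangle_ineq)
  also have "\<dots> \<le> c * e4 + cmod W * (M + e1)"
    using c h4 nE by (intro add_mono mult_left_mono) auto
  finally have nN: "cmod (N - of_real c) \<le> e2" using e2 by simp
  have e2p: "e2 \<ge> 0" using nN norm_ge_zero order_trans by blast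
  have "c \<le> cmod N + cmod (N - of_real c)"
    using norm_triangle_ineq4[of N "N - of_real c"] c by simp
  then have Nb: "cmod N \<ge> c / 2" using nN e2s by simp
  then have N0: "N \<noteq> 0" using c by auto
  have Q: "of_real c * \<rho> / E + W = N / E" using E by (simp add: N_def field_simps)
  have "chordal (N / E) (of_real c / E0) \<le> 2 * cmod (1 / (N/E) - 1 / (of_real c / E0))"
    using N0 E E0 c by (intro chordal_le_inv) auto
  also have "1 / (N/E) - 1 / (of_real c / E0) = (of_real c * (E - E0) + (of_real c - N) * E0) / (N * of_real c)"
    using N0 E E0 c by (simp add: field_simps)
  also have "cmod \<dots> = cmod (of_real c * (E - E0) + (of_real c - N) * E0) / (cmod N * c)"
    using c by (simp add: norm_divide norm_mult)
  also have "\<dots> \<le> (c * e1 + e2 * M) / (c / 2 * c)"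
  proof (rule frac_le)
    have "cmod (of_real c * (E - E0) + (of_real c - N) * E0) \<le> c * cmod (E - E0) + cmod (of_real c - N) * cmod E0"
      using c by (metis abs_of_pos norm_mult norm_of_real norm_triangle_ineq)
    also have "\<dots> \<le> c * e1 + e2 * M"
      using c h1 hM nN e2p by (intro add_mono mult_mono mult_left_mono) (auto simp: norm_minus_commute)
    finally show "cmod (of_real c * (E - E0) + (of_real c - N) * E0) \<le> c * e1 + e2 * M" .
    have "e2 \<ge> 0" using nN norm_ge_zero order_trans by blast
    moreover have "M \<ge> 0" using hM norm_ge_zero order_trans by blast
    ultimately show "0 \<le> c * e1 + e2 * M" using c e1 by simp
    show "0 < c / 2 * c" using c by simp
    show "c / 2 * c \<le> cmod N * c" using Nb c by simp
  qed
  finally show ?thesis using Q by (simp add: mult.commute)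
qed

lemma part2_point:
  fixes v \<rho> Dw :: complex and k wq dn Rn e4 e3 :: real
  assumes dn: "dn > 0" and hv: "cmod v \<le> Rn" and h4: "cmod (\<rho> - 1) \<le> e4"
    and h3: "cmod (Dw - 1) \<le> e3" and e3: "e3 \<le> 1/2"
    and A: "v * \<rho> / (of_real dn * Dw) + of_real wq \<noteq> 0"
    and B: "of_real k + v / of_real dn \<noteq> 0"
  shows "chordal (1 / (v * \<rho> / (of_real dn * Dw) + of_real wq)) (1 / (of_real k + v / of_real dn))
      \<le> 2 * (\<bar>wq - k\<bar> + Rn / dn * (2 * (e4 + e3)))"
proof -
  have "1 \<le> cmod Dw + cmod (Dw - 1)"
    using norm_triangle_ineq4[of Dw "Dw - 1"] by simp
  then have nD: "cmod Dw \<ge> 1/2" using h3 e3 by simp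
  then have D0: "Dw \<noteq> 0" by auto
  have "cmod (\<rho> - Dw) \<le> cmod (\<rho> - 1) + cmod (Dw - 1)"
    using norm_triangle_ineq4[of "\<rho> - 1" "Dw - 1"] by simp
  then have nr: "cmod (\<rho> - Dw) \<le> e4 + e3" using h4 h3 by simp
  have eqAB: "(v * \<rho> / (of_real dn * Dw) + of_real wq) - (of_real k + v / of_real dn)
      = v * (\<rho> - Dw) / (of_real dn * Dw) + of_real (wq - k)"
    using D0 dn by (simp add: field_simps)
  have nm: "cmod (v * (\<rho> - Dw) / (of_real dn * Dw)) = cmod v * cmod (\<rho> - Dw) / (dn * cmod Dw)"
    using dn by (simp add: norm_divide norm_mult)
  have "cmod ((v * \<rho> / (of_real dn * Dw) + of_real wq) - (of_real k + v / of_real dn))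
     = cmod (v * (\<rho> - Dw) / (of_real dn * Dw) + of_real (wq - k))"
    by (simp only: eqAB)
  also have "\<dots> \<le> cmod (v * (\<rho> - Dw) / (of_real dn * Dw)) + cmod (of_real (wq - k) :: complex)"
    by (rule norm_triangle_ineq)
  also have "\<dots> = cmod v * cmod (\<rho> - Dw) / (dn * cmod Dw) + \<bar>wq - k\<bar>"
    by (simp only: nm norm_of_real)
  also have "cmod v * cmod (\<rho> - Dw) / (dn * cmod Dw) \<le> Rn * (e4 + e3) / (dn * (1/2))"
  proof -
    have "Rn \<ge> 0" "e4 + e3 \<ge> 0" using hv nr norm_ge_zero order_trans by blast+
    then show ?thesis using dn nD hv nr by (intro frac_le mult_mono) auto
  qed
  also have "Rn * (e4 + e3) / (dn * (1/2)) = Rn / dn * (2 * (e4 + e3))" by simp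
  finally have nAB: "cmod ((v * \<rho> / (of_real dn * Dw) + of_real wq) - (of_real k + v / of_real dn))
      \<le> \<bar>wq - k\<bar> + Rn / dn * (2 * (e4 + e3))" by simp
  have "chordal (1 / (v * \<rho> / (of_real dn * Dw) + of_real wq)) (1 / (of_real k + v / of_real dn))
     = chordal (v * \<rho> / (of_real dn * Dw) + of_real wq) (of_real k + v / of_real dn)"
    by (rule chordal_inv[OF A B])
  also have "\<dots> \<le> 2 * cmod ((v * \<rho> / (of_real dn * Dw) + of_real wq) - (of_real k + v / of_real dn))"
    by (rule chordal_le)
  also have "\<dots> \<le> 2 * (\<bar>wq - k\<bar> + Rn / dn * (2 * (e4 + e3)))" using nAB by simp
  finally show ?thesis .
qed



lemma powr_at_right_0: "a > 0 \<Longrightarrow> ((\<lambda>s::real. s powr a) \<longlongrightarrow> 0) (at_right 0)"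
  by (rule tendsto_zero_powrI[of "\<lambda>s. s" _ "\<lambda>_. a" a])
     (auto intro: tendsto_ident_at eventually_mono[OF eventually_at_right_less])

context params begin

lemma sigma_tendsto: "((\<lambda>s. s powr nu n d) \<longlongrightarrow> 0) (at_right 0)"
  using powr_at_right_0[OF nu_pos] .

lemma b_tendsto:
  assumes i: "1 \<le> i"
  shows "((\<lambda>s. bcoef n d s i) \<longlongrightarrow> 0) (at_right 0)"
proof -
  define C where "C = exp (2 * ln (dmax n d) / real (d 1) + beta d i * ln (tau n d))"
  have ev: "\<forall>\<^sub>F s in at_right 0. C * s powr beta d i = bcoef n d s i"
    using eventually_at_right_less[of "0::real"]
    by eventually_elim (simp add: C_def bcoef_eq[OF _ dmax_pos tau_pos i])
  have "((\<lambda>s. C * s powr beta d i) \<longlongrightarrow> C * 0) (at_right 0)"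
    by (intro tendsto_intros powr_at_right_0 beta_pos i)
  then show ?thesis using tendsto_cong[OF ev] by simp
qed

lemma ratio_tendsto:
  assumes i: "1 \<le> i" "i \<le> n - 1"
  shows "((\<lambda>s. s powr nu n d / bcoef n d s i) \<longlongrightarrow> 0) (at_right 0)"
proof -
  define C where "C = exp (2 * ln (dmax n d) / real (d 1) + beta d i * ln (tau n d))"
  have ev: "\<forall>\<^sub>F s in at_right 0. s powr (nu n d - beta d i) / C = s powr nu n d / bcoef n d s i"
    using eventually_at_right_less[of "0::real"]
    by eventually_elim (simp add: C_def bcoef_eq[OF _ dmax_pos tau_pos i(1)] powr_diff)
  have "((\<lambda>s. s powr (nu n d - beta d i) / C) \<longlongrightarrow> 0 / C) (at_right 0)"
    using nu_gt[OF i] by (intro tendsto_intros powr_at_right_0) (auto simp: C_def)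
  then show ?thesis using tendsto_cong[OF ev] by simp
qed

end


lemma cmod_of_real_minus1: "cmod (complex_of_real a - 1) = \<bar>a - 1\<bar>"
  by (metis norm_of_real of_real_1 of_real_diff)

lemma E_bound:
  fixes u :: complex and c X Y Z R :: real
  assumes u: "cmod u \<le> R" and c: "c \<ge> 1"
  shows "cmod (((of_real c - 1) * of_real X + of_real Y * u^(k-1) + of_real Z * u^k) - ((of_real c - 1) + u^k))
     \<le> (c - 1) * \<bar>X - 1\<bar> + \<bar>Y\<bar> * R^(k-1) + \<bar>Z - 1\<bar> * R^k"
proof -
  have R: "R \<ge> 0" using u norm_ge_zero order_trans by blast
  have eq: "((of_real c - 1) * of_real X + of_real Y * u^(k-1) + of_real Z * u^k) - ((of_real c - 1) + u^k)
     = of_real ((c - 1) * (X - 1)) + of_real Y * u^(k-1) + of_real (Z - 1) * u^k"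
    by (simp add: algebra_simps)
  have p1: "cmod (u^(k-1)) \<le> R^(k-1)" using u by (simp add: norm_power power_mono)
  have p2: "cmod (u^k) \<le> R^k" using u by (simp add: norm_power power_mono)
  have "cmod (of_real ((c - 1) * (X - 1)) + of_real Y * u^(k-1) + of_real (Z - 1) * u^k)
     \<le> cmod (of_real ((c - 1) * (X - 1)) :: complex) + cmod (of_real Y * u^(k-1)) + cmod (of_real (Z - 1) * u^k)"
    by (meson add_mono norm_triangle_ineq order_trans order_refl)
  also have "\<dots> = (c - 1) * \<bar>X - 1\<bar> + \<bar>Y\<bar> * cmod (u^(k-1)) + \<bar>Z - 1\<bar> * cmod (u^k)"
    using c by (simp add: norm_mult abs_mult cmod_of_real_minus1)
  also have "\<dots> \<le> (c - 1) * \<bar>X - 1\<bar> + \<bar>Y\<bar> * R^(k-1) + \<bar>Z - 1\<bar> * R^k"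
    using p1 p2 c by (intro add_mono mult_left_mono) auto
  finally show ?thesis unfolding eq .
qed

lemma E0_bound:
  fixes u :: complex and c R :: real
  assumes u: "cmod u \<le> R" and c: "c \<ge> 1"
  shows "cmod ((of_real c - 1) + u^k) \<le> (c - 1) + R^k"
proof -
  have "cmod ((of_real c - 1) + u^k) \<le> cmod (of_real (c - 1) :: complex) + cmod (u^k)"
    by (metis norm_triangle_ineq of_real_1 of_real_diff)
  also have "\<dots> \<le> (c - 1) + R^k" using u c by (simp add: norm_power power_mono cmod_of_real_minus1)
  finally show ?thesis .
qed

lemma DE_eq:
  fixes z :: complex
  assumes z: "z \<noteq> 0" and k: "k \<ge> 1"
  shows "a * z ^ k + b * z + e = z ^ k * (a + b * (1/z)^(k - 1) + e * (1/z)^k)"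
proof -
  have "z ^ k * (1/z)^(k - 1) = z"
  proof -
    have "z ^ k = z * z ^ (k - 1)" using k by (metis Suc_diff_le diff_Suc_1 power_Suc)
    then show ?thesis using z by (simp add: power_one_over)
  qed
  moreover have "z ^ k * (1/z)^k = 1" using z by (simp add: power_one_over)
  ultimately show ?thesis by (simp add: algebra_simps)
qed



lemma h_factor:
  fixes z :: complex assumes z: "z \<noteq> 0"
  shows "(of_nat k - 1) * z ^ k + 1 = z ^ k * ((of_nat k - 1) + (1/z)^k)"
  using z by (simp add: algebra_simps power_one_over)

lemma hmap_form:
  fixes z :: complex assumes z: "z \<noteq> 0"
  shows "hmap k z = of_nat k / ((of_nat k - 1) + (1/z)^k)"
  unfolding hmap_def h_factor[OF z] using z by simp

lemma h_reg_nz: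
  fixes z :: complex assumes z: "z \<noteq> 0" and h: "h_regular k z"
  shows "(of_nat k - 1) + (1/z)^k \<noteq> 0"
  using h unfolding h_regular_def h_factor[OF z] by simp

context params begin

lemma eta_bound:
  fixes x :: complex and f :: "nat \<Rightarrow> real"
  assumes bp: "\<And>j. j \<in> {1..n-1} \<Longrightarrow> f j > 0" and i: "i \<in> {1..n-1}" and x: "cmod x \<le> q"
  shows "cmod ((x * of_real (f i))^DD d i) \<le> (\<Sum>j=1..n-1. (q * f j)^DD d j)"
proof -
  have q: "q \<ge> 0" using x norm_ge_zero order_trans by blast
  have "cmod ((x * of_real (f i))^DD d i) = (cmod x * f i)^DD d i"
    using bp[OF i] by (simp add: norm_power norm_mult)
  also have "\<dots> \<le> (q * f i)^DD d i"
    using x bp[OF i] by (intro power_mono mult_right_mono) auto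
  also have "\<dots> \<le> (\<Sum>j=1..n-1. (q * f j)^DD d j)"
  proof (rule member_le_sum)
    show "i \<in> {1..n-1}" by (rule i)
    show "finite {1..n-1}" by simp
    fix j assume "j \<in> {1..n-1} - {i}"
    then have "f j > 0" using bp by auto
    then show "0 \<le> (q * f j)^DD d j" using q by simp
  qed
  finally show ?thesis .
qed

end


context params begin

lemma DD_pos: "j \<in> {1..n-1} \<Longrightarrow> DD d j > 0"
proof -
  assume j: "j \<in> {1..n-1}"
  then have "d j > 0" using dpos'[of j] by auto
  then show ?thesis unfolding DD_def by simp
qed

lemma part1:
  fixes X Y Z W :: "real \<Rightarrow> real"
  assumes X: "(X \<longlongrightarrow> 1) (at_right 0)" and Y: "(Y \<longlongrightarrow> 0) (at_right 0)"
    and Z: "(Z \<longlongrightarrow> 1) (at_right 0)" and W: "(W \<longlongrightarrow> 0) (at_right 0)"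
  shows "loc_unif_conv_sphere (\<lambda>s. Qn n d s (X s) (Y s) (Z s) (W s))
     (\<lambda>s. Qn_regular n d s (X s) (Y s) (Z s)) (hmap (d 1)) (h_regular (d 1))"
  unfolding loc_unif_conv_sphere_def
proof (intro allI impI)
  fix r \<epsilon> :: real assume r: "r > 0" and \<epsilon>: "\<epsilon> > 0"
  define R where "R = 1/r"
  define c where "c = real (d 1)"
  define M where "M = (c - 1) + R^(d 1)"
  define e1 where "e1 s = (c - 1) * \<bar>X s - 1\<bar> + \<bar>Y s\<bar> * R^(d 1 - 1) + \<bar>Z s - 1\<bar> * R^(d 1)" for s
  define \<eta> where "\<eta> s = (\<Sum>j=1..n-1. (R * bcoef n d s j)^DD d j)" for s
  define e4 where "e4 s = (1 + 2 * \<eta> s)^(n-1) - 1" for s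
  define e2 where "e2 s = c * e4 s + \<bar>W s\<bar> * (M + e1 s)" for s
  define g where "g s = 2 * ((c * e1 s + e2 s * M) / (c * c / 2))" for s
  have c1: "c > 1" using d1_gt1 c_def by simp
  have t1: "(e1 \<longlongrightarrow> 0) (at_right 0)"
  proof -
    have "(e1 \<longlongrightarrow> (c - 1) * \<bar>1 - 1\<bar> + \<bar>0\<bar> * R^(d 1 - 1) + \<bar>1 - 1\<bar> * R^(d 1)) (at_right 0)"
      unfolding e1_def by (intro tendsto_intros X Y Z)
    then show ?thesis by simp
  qed
  have t\<eta>: "(\<eta> \<longlongrightarrow> 0) (at_right 0)"
  proof -
    have "(\<eta> \<longlongrightarrow> (\<Sum>j=1..n-1. (R * 0)^DD d j)) (at_right 0)"
      unfolding \<eta>_def by (intro tendsto_sum tendsto_power tendsto_mult tendsto_const b_tendsto) auto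
    moreover have "(\<Sum>j=1..n-1. (R * 0::real)^DD d j) = 0"
      using DD_pos by (intro sum.neutral) auto
    ultimately show ?thesis by simp
  qed
  have t4: "(e4 \<longlongrightarrow> 0) (at_right 0)"
  proof -
    have "(e4 \<longlongrightarrow> (1 + 2 * 0)^(n-1) - 1) (at_right 0)"
      unfolding e4_def by (intro tendsto_intros t\<eta>)
    then show ?thesis by simp
  qed
  have t2: "(e2 \<longlongrightarrow> 0) (at_right 0)"
  proof -
    have "(e2 \<longlongrightarrow> c * 0 + \<bar>0\<bar> * (M + 0)) (at_right 0)"
      unfolding e2_def by (intro tendsto_intros t4 t1 W)
    then show ?thesis by simp
  qed
  have tg: "(g \<longlongrightarrow> 0) (at_right 0)"
  proof -
    have "(g \<longlongrightarrow> 2 * ((c * 0 + 0 * M) / (c * c / 2))) (at_right 0)"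
      unfolding g_def using c1 by (intro tendsto_mult tendsto_divide tendsto_add tendsto_const t2 t1) simp
    then show ?thesis by simp
  qed
  have ev: "\<forall>\<^sub>F s in at_right 0. s > 0 \<and> \<eta> s < 1/2 \<and> e2 s < c/2 \<and> g s < \<epsilon>"
  proof -
    have a: "\<forall>\<^sub>F s in at_right 0. \<eta> s < 1/2" by (rule order_tendstoD(2)[OF t\<eta>]) simp
    have b: "\<forall>\<^sub>F s in at_right 0. e2 s < c/2" by (rule order_tendstoD(2)[OF t2]) (use c1 in simp)
    have e: "\<forall>\<^sub>F s in at_right 0. g s < \<epsilon>" by (rule order_tendstoD(2)[OF tg \<epsilon>])
    show ?thesis
      by (intro eventually_conj eventually_at_right_less a b e)
  qed
  then show "\<forall>\<^sub>F s in at_right 0. \<forall>z. r \<le> cmod z \<longrightarrow> Qn_regular n d s (X s) (Y s) (Z s) z \<longrightarrow>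
      h_regular (d 1) z \<longrightarrow> chordal (Qn n d s (X s) (Y s) (Z s) (W s) z) (hmap (d 1) z) < \<epsilon>"
  proof eventually_elim
    case (elim s)
    then have s: "s > 0" by simp
    show ?case
    proof (intro allI impI)
      fix z assume rz: "r \<le> cmod z" and reg: "Qn_regular n d s (X s) (Y s) (Z s) z"
        and hreg: "h_regular (d 1) z"
      have z: "z \<noteq> 0" using r rz by auto
      define u where "u = 1/z"
      have u: "cmod u \<le> R"
      proof -
        have "cmod u = 1 / cmod z" by (simp add: u_def norm_divide)
        also have "\<dots> \<le> 1 / r" using r rz by (intro frac_le) auto
        finally show ?thesis by (simp add: R_def)
      qed
      define E where "E = (of_real c - 1) * of_real (X s) + of_real (Y s) * u^(d 1 - 1) + of_real (Z s) * u^(d 1)"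
      define E0 where "E0 = (of_real c - 1) + u^(d 1)"
      define \<rho> where "\<rho> = (\<Prod>i=1..n-1. (1 - (of_real (bcoef n d s i) / z)^DD d i) powi ((-1::int)^(i-1)))"
      have Q: "Qn n d s (X s) (Y s) (Z s) (W s) z = of_real c * \<rho> / E + of_real (W s)"
        using Qn_form1[OF z, of s "X s" "Y s" "Z s" "W s"] by (simp add: \<rho>_def E_def u_def c_def)
      have h: "hmap (d 1) z = of_real c / E0" using hmap_form[OF z] by (simp add: E0_def u_def c_def)
      have E0nz: "E0 \<noteq> 0" using h_reg_nz[OF z hreg] by (simp add: E0_def u_def c_def)
      have d1: "d 1 \<ge> 1" using c1 c_def by simp
      have Enz: "E \<noteq> 0"
        using reg DE_eq[OF z d1, of "(of_nat (d 1) - 1) * of_real (X s)" "of_real (Y s)" "of_real (Z s)"]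
        by (auto simp: Qn_regular_def E_def u_def c_def)
      have b1: "cmod (E - E0) \<le> e1 s"
        using E_bound[OF u, where c=c and X="X s" and Y="Y s" and Z="Z s" and k="d 1"] c1 by (simp add: E_def E0_def e1_def)
      have bM: "cmod E0 \<le> M" using E0_bound[OF u, where c=c and k="d 1"] c1 by (simp add: E0_def M_def)
      have bp: "\<And>j. j \<in> {1..n-1} \<Longrightarrow> bcoef n d s j > 0"
        using bcoef_pos_ln[OF s dmax_pos tau_pos] by auto
      have b4: "cmod (\<rho> - 1) \<le> e4 s"
      proof -
        have "\<forall>i\<in>{1..n-1}. cmod ((of_real (bcoef n d s i) / z)^DD d i) \<le> \<eta> s"
        proof
          fix i assume i: "i \<in> {1..n-1}"
          have "of_real (bcoef n d s i) / z = u * of_real (bcoef n d s i)" by (simp add: u_def)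
          then show "cmod ((of_real (bcoef n d s i) / z)^DD d i) \<le> \<eta> s"
            using eta_bound[OF bp i u] by (simp add: \<eta>_def)
        qed
        then have "cmod (\<rho> - 1) \<le> (1 + 2 * \<eta> s)^card {1..n-1} - 1"
          unfolding \<rho>_def using elim by (intro prod_near1) auto
        then show ?thesis by (simp add: e4_def)
      qed
      have e2eq: "e2 s = c * e4 s + cmod (of_real (W s) :: complex) * (M + e1 s)"
        by (simp add: e2_def)
      have "chordal (of_real c * \<rho> / E + of_real (W s)) (of_real c / E0) \<le> g s"
        using part1_point[OF _ b1 bM b4 e2eq _ Enz E0nz] c1 elim unfolding g_def by auto
      then show "chordal (Qn n d s (X s) (Y s) (Z s) (W s) z) (hmap (d 1) z) < \<epsilon>"
        using Q h elim by simp
    qed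
  qed
qed

end


lemma Dw_bound:
  fixes w :: complex and c X Y Z q :: real
  assumes w: "cmod w \<le> q" and c: "c \<ge> 1"
  shows "cmod ((of_real c - 1) * of_real X * w ^ k + of_real Y * w + of_real Z - 1)
     \<le> (c - 1) * \<bar>X\<bar> * q ^ k + \<bar>Y\<bar> * q + \<bar>Z - 1\<bar>"
proof -
  have q: "q \<ge> 0" using w norm_ge_zero order_trans by blast
  have eq: "(of_real c - 1) * of_real X * w ^ k + of_real Y * w + of_real Z - 1
     = of_real ((c - 1) * X) * w ^ k + of_real Y * w + of_real (Z - 1)"
    by (simp add: algebra_simps)
  have p: "cmod (w^k) \<le> q^k" using w by (simp add: norm_power power_mono)
  have "cmod (of_real ((c - 1) * X) * w ^ k + of_real Y * w + of_real (Z - 1))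
     \<le> cmod (of_real ((c - 1) * X) * w ^ k) + cmod (of_real Y * w) + cmod (of_real (Z - 1) :: complex)"
    by (meson add_mono norm_triangle_ineq order_trans order_refl)
  also have "\<dots> = (c - 1) * \<bar>X\<bar> * cmod (w ^ k) + \<bar>Y\<bar> * cmod w + \<bar>Z - 1\<bar>"
    using c by (simp add: norm_mult abs_mult cmod_of_real_minus1)
  also have "\<dots> \<le> (c - 1) * \<bar>X\<bar> * q ^ k + \<bar>Y\<bar> * q + \<bar>Z - 1\<bar>"
    using p w c by (intro add_mono mult_left_mono) auto
  finally show ?thesis unfolding eq .
qed

context params begin

lemma part2:
  fixes X Y Z W :: "real \<Rightarrow> real"
  assumes X: "(X \<longlongrightarrow> 1) (at_right 0)" and Y: "(Y \<longlongrightarrow> 0) (at_right 0)"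
    and Z: "(Z \<longlongrightarrow> 1) (at_right 0)"
    and Wq: "((\<lambda>s. W s / s powr nu n d) \<longlongrightarrow> (real (d n) - 1) / real (d n)) (at_right 0)"
  shows "loc_unif_conv_sphere (\<lambda>s. Qhat n d s (X s) (Y s) (Z s) (W s))
     (\<lambda>s. Qhat_regular n d s (X s) (Y s) (Z s) (W s)) (hmap (d n)) (h_regular (d n))"
  unfolding loc_unif_conv_sphere_def
proof (intro allI impI)
  fix r \<epsilon> :: real assume r: "r > 0" and \<epsilon>: "\<epsilon> > 0"
  define R where "R = 1/r"
  define c where "c = real (d 1)"
  define dn where "dn = real (d n)"
  define k where "k = (dn - 1) / dn"
  define \<sigma> where "\<sigma> s = s powr nu n d" for s :: real
  define e3 where "e3 s = (c - 1) * \<bar>X s\<bar> * (\<sigma> s * R) ^ d 1 + \<bar>Y s\<bar> * (\<sigma> s * R) + \<bar>Z s - 1\<bar>" for s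
  define \<eta> where "\<eta> s = (\<Sum>j=1..n-1. (R * (\<sigma> s / bcoef n d s j))^DD d j)" for s
  define e4 where "e4 s = (1 + 2 * \<eta> s)^(n-1) - 1" for s
  define g where "g s = 2 * (\<bar>W s / \<sigma> s - k\<bar> + R ^ d n / dn * (2 * (e4 s + e3 s)))" for s
  have c1: "c > 1" using d1_gt1 c_def by simp
  have dn1: "dn > 1" using dn_gt1 dn_def by simp
  have ts: "(\<sigma> \<longlongrightarrow> 0) (at_right 0)" unfolding \<sigma>_def by (rule sigma_tendsto)
  have t3: "(e3 \<longlongrightarrow> 0) (at_right 0)"
  proof -
    have "(e3 \<longlongrightarrow> (c - 1) * \<bar>1\<bar> * (0 * R) ^ d 1 + \<bar>0\<bar> * (0 * R) + \<bar>1 - 1\<bar>) (at_right 0)"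
      unfolding e3_def by (intro tendsto_intros X Y Z ts)
    moreover have "d 1 > 0" using c1 c_def by simp
    ultimately show ?thesis by (simp add: power_0_left)
  qed
  have t\<eta>: "(\<eta> \<longlongrightarrow> 0) (at_right 0)"
  proof -
    have "(\<eta> \<longlongrightarrow> (\<Sum>j=1..n-1. (R * 0)^DD d j)) (at_right 0)"
      unfolding \<eta>_def \<sigma>_def
      by (intro tendsto_sum tendsto_power tendsto_mult tendsto_const ratio_tendsto) auto
    moreover have "(\<Sum>j=1..n-1. (R * 0::real)^DD d j) = 0"
      using DD_pos by (intro sum.neutral) auto
    ultimately show ?thesis by simp
  qed
  have t4: "(e4 \<longlongrightarrow> 0) (at_right 0)"
  proof -
    have "(e4 \<longlongrightarrow> (1 + 2 * 0)^(n-1) - 1) (at_right 0)"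
      unfolding e4_def by (intro tendsto_intros t\<eta>)
    then show ?thesis by simp
  qed
  have tg: "(g \<longlongrightarrow> 0) (at_right 0)"
  proof -
    have "(g \<longlongrightarrow> 2 * (\<bar>k - k\<bar> + R ^ d n / dn * (2 * (0 + 0)))) (at_right 0)"
      unfolding g_def using dn1
      by (intro tendsto_mult tendsto_add tendsto_divide tendsto_const tendsto_rabs tendsto_diff t4 t3)
        (auto simp: k_def dn_def \<sigma>_def Wq)
    then show ?thesis by simp
  qed
  have ev: "\<forall>\<^sub>F s in at_right 0. s > 0 \<and> \<eta> s < 1/2 \<and> e3 s < 1/2 \<and> g s < \<epsilon>"
  proof -
    have a: "\<forall>\<^sub>F s in at_right 0. \<eta> s < 1/2" by (rule order_tendstoD(2)[OF t\<eta>]) simp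
    have b: "\<forall>\<^sub>F s in at_right 0. e3 s < 1/2" by (rule order_tendstoD(2)[OF t3]) simp
    have e: "\<forall>\<^sub>F s in at_right 0. g s < \<epsilon>" by (rule order_tendstoD(2)[OF tg \<epsilon>])
    show ?thesis
      by (intro eventually_conj eventually_at_right_less a b e)
  qed
  then show "\<forall>\<^sub>F s in at_right 0. \<forall>z. r \<le> cmod z \<longrightarrow> Qhat_regular n d s (X s) (Y s) (Z s) (W s) z \<longrightarrow>
      h_regular (d n) z \<longrightarrow> chordal (Qhat n d s (X s) (Y s) (Z s) (W s) z) (hmap (d n) z) < \<epsilon>"
  proof eventually_elim
    case (elim s)
    then have s: "s > 0" by simp
    have sig: "\<sigma> s > 0" using s by (simp add: \<sigma>_def)
    show ?case
    proof (intro allI impI)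
      fix z assume rz: "r \<le> cmod z" and reg: "Qhat_regular n d s (X s) (Y s) (Z s) (W s) z"
        and hreg: "h_regular (d n) z"
      have z: "z \<noteq> 0" using r rz by auto
      define u where "u = 1/z"
      have u: "cmod u \<le> R"
      proof -
        have "cmod u = 1 / cmod z" by (simp add: u_def norm_divide)
        also have "\<dots> \<le> 1 / r" using r rz by (intro frac_le) auto
        finally show ?thesis by (simp add: R_def)
      qed
      define w where "w = of_real (\<sigma> s) / z"
      have wu: "w = u * of_real (\<sigma> s)" by (simp add: w_def u_def)
      have wb: "cmod w \<le> \<sigma> s * R"
        using u sig by (simp add: wu norm_mult mult.commute)
      define Dw where "Dw = (of_real c - 1) * of_real (X s) * w ^ d 1 + of_real (Y s) * w + of_real (Z s)"
      define \<rho> where "\<rho> = (\<Prod>i=1..n-1. (1 - (w / of_real (bcoef n d s i))^DD d i) powi ((-1::int)^(i-1)))"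
      define A where "A = u ^ d n * \<rho> / (of_real dn * Dw) + of_real (W s / \<sigma> s)"
      have QA: "Qn n d s (X s) (Y s) (Z s) (W s) w = of_real (\<sigma> s) * A"
        using Qhat_form[OF s z, of "X s" "Y s" "Z s" "W s"]
        by (simp add: A_def \<rho>_def Dw_def u_def w_def c_def dn_def \<sigma>_def)
      have Qnz: "Qn n d s (X s) (Y s) (Z s) (W s) w \<noteq> 0"
        using reg by (simp add: Qhat_regular_def w_def \<sigma>_def)
      then have Anz: "A \<noteq> 0" using QA by simp
      have Qh: "Qhat n d s (X s) (Y s) (Z s) (W s) z = 1 / A"
      proof -
        have "Qhat n d s (X s) (Y s) (Z s) (W s) z = of_real (\<sigma> s) / Qn n d s (X s) (Y s) (Z s) (W s) w"
          by (simp add: Qhat_def w_def \<sigma>_def)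
        also have "\<dots> = 1 / A" using QA sig Anz by simp
        finally show ?thesis .
      qed
      define B where "B = of_real k + u ^ d n / of_real dn"
      have B_eq: "B = ((of_nat (d n) - 1) + u ^ d n) / of_nat (d n)"
        using dn1 by (simp add: B_def k_def dn_def field_simps)
      have Bnz: "B \<noteq> 0" using h_reg_nz[OF z hreg] dn1 by (simp add: B_eq u_def dn_def)
      have hB: "hmap (d n) z = 1 / B" using hmap_form[OF z] by (simp add: B_eq u_def)
      have vb: "cmod (u ^ d n) \<le> R ^ d n" using u by (simp add: norm_power power_mono)
      have b3: "cmod (Dw - 1) \<le> e3 s"
        using Dw_bound[OF wb, where c=c and X="X s" and Y="Y s" and Z="Z s" and k="d 1"] c1
        by (simp add: Dw_def e3_def)
      have bp: "\<And>j. j \<in> {1..n-1} \<Longrightarrow> \<sigma> s / bcoef n d s j > 0"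
        using bcoef_pos_ln[OF s dmax_pos tau_pos] sig by auto
      have b4: "cmod (\<rho> - 1) \<le> e4 s"
      proof -
        have "\<forall>i\<in>{1..n-1}. cmod ((w / of_real (bcoef n d s i))^DD d i) \<le> \<eta> s"
        proof
          fix i assume i: "i \<in> {1..n-1}"
          have bi: "bcoef n d s i > 0" using bcoef_pos_ln[OF s dmax_pos tau_pos] i by auto
          have eq: "w / of_real (bcoef n d s i) = u * of_real (\<sigma> s / bcoef n d s i)"
            using bi by (simp add: wu)
          have "cmod ((u * of_real (\<sigma> s / bcoef n d s i))^DD d i) \<le> \<eta> s"
            using eta_bound[where f="\<lambda>j. \<sigma> s / bcoef n d s j", OF bp i u] by (simp add: \<eta>_def)
          then show "cmod ((w / of_real (bcoef n d s i))^DD d i) \<le> \<eta> s"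
            unfolding eq .
        qed
        then have "cmod (\<rho> - 1) \<le> (1 + 2 * \<eta> s)^card {1..n-1} - 1"
          unfolding \<rho>_def using elim by (intro prod_near1) auto
        then show ?thesis by (simp add: e4_def)
      qed
      have "chordal (1 / A) (1 / B) \<le> g s"
        unfolding A_def B_def g_def
        using part2_point[of dn "u ^ d n" "R ^ d n" \<rho> "e4 s" Dw "e3 s" "W s / \<sigma> s" k] dn1 vb b4 b3 elim
          Anz Bnz unfolding A_def B_def by simp
      then show "chordal (Qhat n d s (X s) (Y s) (Z s) (W s) z) (hmap (d n) z) < \<epsilon>"
        using Qh hB elim by simp
    qed
  qed
qed

end


lemma lim_from_scaled:
  fixes F \<sigma> :: "real \<Rightarrow> real"
  assumes "((\<lambda>s. (F s - a) / \<sigma> s) \<longlongrightarrow> L) (at_right 0)" "(\<sigma> \<longlongrightarrow> 0) (at_right 0)"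
    and "\<forall>\<^sub>F s in at_right 0. \<sigma> s \<noteq> 0"
  shows "(F \<longlongrightarrow> a) (at_right 0)"
proof -
  have "((\<lambda>s. (F s - a) / \<sigma> s * \<sigma> s + a) \<longlongrightarrow> L * 0 + a) (at_right 0)"
    by (intro tendsto_intros assms)
  moreover have "\<forall>\<^sub>F s in at_right 0. (F s - a) / \<sigma> s * \<sigma> s + a = F s"
    using assms(3) by eventually_elim simp
  ultimately show ?thesis using tendsto_cong by fastforce
qed

theorem lemma3p4:
  fixes n :: nat and d :: "nat \<Rightarrow> nat" and X Y Z W :: "real \<Rightarrow> real"
  assumes "odd n" and "n \<ge> 3"
    and "\<forall>i\<in>{1..n}. d i > 0"
    and "(\<Sum>i=1..n. 1 / real (d i)) < 1"
    and "\<forall>\<^sub>F s in at_right 0.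
           Qn n d s (X s) (Y s) (Z s) (W s) 1 = 1 \<and>
           (Qn n d s (X s) (Y s) (Z s) (W s) has_field_derivative 1) (at 1) \<and>
           Qn n d s (X s) (Y s) (Z s) (W s) (of_real (s powr nu n d)) = of_real (s powr nu n d) \<and>
           (Qn n d s (X s) (Y s) (Z s) (W s) has_field_derivative 1) (at (of_real (s powr nu n d)))"
    and "((\<lambda>s. (X s - 1) / s powr nu n d) \<longlongrightarrow>
           real (d 1) * (real (d 1) - 3) * (real (d n) - 1) / ((real (d 1) - 1)\<^sup>2 * real (d n)))
           (at_right 0)"
    and "((\<lambda>s. Y s / s powr nu n d) \<longlongrightarrow>
           2 * real (d 1) * (real (d n) - 1) / ((real (d 1) - 1) * real (d n))) (at_right 0)"
    and "((\<lambda>s. (Z s - 1) / s powr nu n d) \<longlongrightarrow> 0) (at_right 0)"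
    and "((\<lambda>s. W s / s powr nu n d) \<longlongrightarrow> (real (d n) - 1) / real (d n)) (at_right 0)"
  shows "loc_unif_conv_sphere
           (\<lambda>s. Qn n d s (X s) (Y s) (Z s) (W s)) (\<lambda>s. Qn_regular n d s (X s) (Y s) (Z s))
           (hmap (d 1)) (h_regular (d 1))
       \<and> loc_unif_conv_sphere
           (\<lambda>s. Qhat n d s (X s) (Y s) (Z s) (W s)) (\<lambda>s. Qhat_regular n d s (X s) (Y s) (Z s) (W s))
           (hmap (d n)) (h_regular (d n))"
proof -
  interpret params n d using assms(1-4) by unfold_locales
  have sig: "((\<lambda>s. s powr nu n d) \<longlongrightarrow> 0) (at_right 0)" by (rule sigma_tendsto)
  have ev: "\<forall>\<^sub>F s in at_right 0. s powr nu n d \<noteq> 0"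
    using eventually_at_right_less[of "0::real"] by eventually_elim simp
  have X1: "(X \<longlongrightarrow> 1) (at_right 0)" by (rule lim_from_scaled[OF assms(6) sig ev])
  have Y0: "(Y \<longlongrightarrow> 0) (at_right 0)" by (rule lim_from_scaled[OF _ sig ev]) (use assms(7) in simp)
  have Z1: "(Z \<longlongrightarrow> 1) (at_right 0)" by (rule lim_from_scaled[OF assms(8) sig ev])
  have W0: "(W \<longlongrightarrow> 0) (at_right 0)" by (rule lim_from_scaled[OF _ sig ev]) (use assms(9) in simp)
  show ?thesis using part1[OF X1 Y0 Z1 W0] part2[OF X1 Y0 Z1 assms(9)] by simp
qed

end
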